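(* For every $n\ge 0$ and $i\in\{0,1\}$, the function $x\mapsto v_n(x,i)$ is nonincreasing on $\{0,1,2,\dots\}$; equivalently $\Delta_n(x,i)\ge 0$ for all $x\ge 0$.
   Context: Parameters: $\lambda>0$, $0<\mu_l<\mu_h$, $\delta=\mu_h-\mu_l$, $R\ge 0$, $c>0$, and $h:\{0,1,2,\dots\}\to\mathbb{R}$ nondecreasing and convex with $h(0)=0$; the rates are normalized so that $\lambda+\mu_h+\beta=1$ for a discount rate $\beta>0$. Finite-horizon value functions on $S=\{0,1,2,\dots\}\times\{0,1\}$: $v_0\equiv 0$ and for $n\ge 0$: $v_{n+1}(0,0)=\lambda v_n(0,1)+\mu_h v_n(0,0)$; $v_{n+1}(x,0)=-h(x)+\lambda v_n(x,1)+\mu_l v_n(x-1,0)+\max\{\delta v_n(x,0),-c+\delta v_n(x-1,0)\}$ for $x\ge1$; $v_{n+1}(x,1)=\max\{R+v_{n+1}(x+1,0),v_{n+1}(x,0)\}$ for $x\ge 0$. Define $\Delta_n(x,i)=v_n(x,i)-v_n(x+1,i)$. *)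

theory Defs
  imports Complex_Main
begin

fun vfun :: "real \<Rightarrow> real \<Rightarrow> real \<Rightarrow> real \<Rightarrow> real \<Rightarrow> (nat \<Rightarrow> real) \<Rightarrow> nat
             \<Rightarrow> (nat \<Rightarrow> real) \<times> (nat \<Rightarrow> real)" where
  "vfun lam muh mul c R h 0 = ((\<lambda>x. 0), (\<lambda>x. 0))"
| "vfun lam muh mul c R h (Suc n) =
     (let (v0, v1) = vfun lam muh mul c R h n;
          w0 = (\<lambda>x. if x = 0 then lam * v1 0 + muh * v0 0
                    else - h x + lam * v1 x + mul * v0 (x - 1)
                         + max ((muh - mul) * v0 x) (- c + (muh - mul) * v0 (x - 1)))
      in (w0, (\<lambda>x. max (R + w0 (x + 1)) (w0 x))))"

definition v :: "real \<Rightarrow> real \<Rightarrow> real \<Rightarrow> real \<Rightarrow> real \<Rightarrow> (nat \<Rightarrow> real) \<Rightarrow> nat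
             \<Rightarrow> nat \<Rightarrow> nat \<Rightarrow> real" where
  "v lam muh mul c R h n x i = (if i = 0 then fst (vfun lam muh mul c R h n) x
                                 else snd (vfun lam muh mul c R h n) x)"

end

theory Submission
  imports Defs
begin

lemma aux:
  assumes l: "lam \<ge> 0" and m: "mul \<ge> 0" and mm: "mul \<le> muh" and c: "c \<ge> 0"
    and mh: "mono h" and h0: "h 0 = 0"
  shows "(\<forall>x. fst (vfun lam muh mul c R h n) (Suc x) \<le> fst (vfun lam muh mul c R h n) x) \<and>
         (\<forall>x. snd (vfun lam muh mul c R h n) (Suc x) \<le> snd (vfun lam muh mul c R h n) x)"
proof (induction n)
  case 0 show ?case by simp
next
  case (Suc n)
  obtain v0 v1 where e: "vfun lam muh mul c R h n = (v0,v1)" by (cases "vfun lam muh mul c R h n")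
  with Suc.IH have A: "\<And>x. v0 (Suc x) \<le> v0 x" and B: "\<And>x. v1 (Suc x) \<le> v1 x" by auto
  define w0 where "w0 = (\<lambda>x. if x = 0 then lam * v1 0 + muh * v0 0
                    else - h x + lam * v1 x + mul * v0 (x - 1)
                         + max ((muh - mul) * v0 x) (- c + (muh - mul) * v0 (x - 1)))"
  have ev: "vfun lam muh mul c R h (Suc n) = (w0, \<lambda>x. max (R + w0 (x+1)) (w0 x))"
    by (simp add: e w0_def)
  have W: "w0 (Suc x) \<le> w0 x" for x
  proof (cases x)
    case 0
    have "h 0 \<le> h 1" using mh by (simp add: mono_def)
    moreover have "lam * v1 1 \<le> lam * v1 0" using B[of 0] l by (simp add: mult_left_mono)
    moreover have "(muh - mul) * v0 1 \<le> (muh - mul) * v0 0" using A[of 0] mm by (simp add: mult_left_mono)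
    ultimately show ?thesis using 0 h0 c by (simp add: w0_def max_def algebra_simps)
  next
    case (Suc y)
    have "h (Suc y) \<le> h (Suc (Suc y))" using mh by (simp add: mono_def)
    moreover have "lam * v1 (Suc (Suc y)) \<le> lam * v1 (Suc y)" using B l by (simp add: mult_left_mono)
    moreover have "mul * v0 (Suc y) \<le> mul * v0 y" using A m by (simp add: mult_left_mono)
    moreover have "(muh - mul) * v0 (Suc (Suc y)) \<le> (muh - mul) * v0 (Suc y)" using A mm by (simp add: mult_left_mono)
    moreover have "(muh - mul) * v0 (Suc y) \<le> (muh - mul) * v0 y" using A mm by (simp add: mult_left_mono)
    ultimately show ?thesis using Suc by (simp add: w0_def max_def)
  qed
  have "max (R + w0 (Suc x + 1)) (w0 (Suc x)) \<le> max (R + w0 (x+1)) (w0 x)" for x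
    using W[of x] W[of "Suc x"] by (simp add: max_def)
  then show ?case using W unfolding ev fst_conv snd_conv by simp
qed

theorem lemma1:
  fixes lam muh mul c R beta :: real and h :: "nat \<Rightarrow> real"
  assumes "lam > 0" and "0 < mul" and "mul < muh" and "R \<ge> 0" and "c > 0"
    and "beta > 0" and "lam + muh + beta = 1"
    and "mono h" and "\<And>x. h (x + 2) - h (x + 1) \<ge> h (x + 1) - h x" and "h 0 = 0"
    and "i \<in> {0, 1}"
  shows "v lam muh mul c R h n (x + 1) i \<le> v lam muh mul c R h n x i"
  using aux[of lam mul muh c h R n] assms by (simp add: v_def)

end
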